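(* Let $f(p)=1+\sum_{n\ge1}a_np^{2n}$ with $a_n\ge0$ for all $n$ and the series converging for all $p\in\mathbb R$, and set $g(s)=f(\sqrt{|s|})$. Then $g$ is convex and nondecreasing on $[0,\infty)$, $g(p^2)=f(p)$, and for every unit vector $\psi$ in the standard model with $\psi\in C_c^\infty((-k_{\max},k_{\max}))$, $$\Delta_\psi\mathbf x\,\Delta_\psi\mathbf p\ \ge\ \tfrac14\,g(\Delta_\psi\mathbf p)^2,\qquad\text{i.e.}\qquad \Delta_\psi\mathbf x\ge\frac{f(\sqrt{\Delta_\psi\mathbf p})^2}{4\Delta_\psi\mathbf p}.$$
   Context: Standard model: $k_{\max}=\int_0^\infty dp/f(p)\in(0,\infty]$, $p(k)$ the inverse of $p\mapsto\int_0^pds/f(s)$, Hilbert space $L^2([-k_{\max},k_{\max}],dk)$ (or $L^2(\mathbb R)$ if $k_{\max}=\infty$), $\mathbf x=i\,d/dk$, $\mathbf p=$ multiplication by $p(k)$, so that $[\mathbf x,\mathbf p]=if(\mathbf p)$ on such $\psi$. $\Delta_\psi A=\langle\psi,A^2\psi\rangle-\langle\psi,A\psi\rangle^2$. *)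

theory Defs
  imports "HOL-Analysis.Analysis"
begin

definition fser :: "(nat \<Rightarrow> real) \<Rightarrow> real \<Rightarrow> real" where
  "fser a p = 1 + (\<Sum>n. a (Suc n) * p ^ (2 * Suc n))"

definition kmax :: "(real \<Rightarrow> real) \<Rightarrow> ennreal" where
  "kmax f = (\<integral>\<^sup>+ p. ennreal (indicator {0..} p / f p) \<partial>lborel)"

definition Kfun :: "(real \<Rightarrow> real) \<Rightarrow> real \<Rightarrow> real" where
  "Kfun f p = (LBINT s=ereal 0..ereal p. 1 / f s)"

definition pfun :: "(real \<Rightarrow> real) \<Rightarrow> real \<Rightarrow> real" where
  "pfun f k = (THE p. Kfun f p = k)"

definition kdom :: "(real \<Rightarrow> real) \<Rightarrow> real set" where
  "kdom f = {k. ennreal \<bar>k\<bar> < kmax f}"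

definition vderiv :: "nat \<Rightarrow> (real \<Rightarrow> complex) \<Rightarrow> real \<Rightarrow> complex" where
  "vderiv n \<psi> = ((\<lambda>g x. vector_derivative g (at x)) ^^ n) \<psi>"

definition smooth :: "(real \<Rightarrow> complex) \<Rightarrow> bool" where
  "smooth \<psi> \<longleftrightarrow> (\<forall>n x. vderiv n \<psi> differentiable (at x))"

text \<open>psi in C_c^infinity(U): smooth with compact topological support contained in U
  (psi is regarded as a function on R vanishing outside U).\<close>
definition Cc_inf :: "real set \<Rightarrow> (real \<Rightarrow> complex) \<Rightarrow> bool" where
  "Cc_inf U \<psi> \<longleftrightarrow> smooth \<psi> \<and> compact (closure {k. \<psi> k \<noteq> 0})
      \<and> closure {k. \<psi> k \<noteq> 0} \<subseteq> U"

definition inner2 :: "(real \<Rightarrow> complex) \<Rightarrow> (real \<Rightarrow> complex) \<Rightarrow> complex" where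
  "inner2 \<phi> \<xi> = (LINT k|lborel. cnj (\<phi> k) * \<xi> k)"

definition xop :: "(real \<Rightarrow> complex) \<Rightarrow> real \<Rightarrow> complex" where
  "xop \<psi> = (\<lambda>k. \<i> * vector_derivative \<psi> (at k))"

definition pop :: "(real \<Rightarrow> real) \<Rightarrow> (real \<Rightarrow> complex) \<Rightarrow> real \<Rightarrow> complex" where
  "pop f \<psi> = (\<lambda>k. complex_of_real (pfun f k) * \<psi> k)"

definition Delta :: "((real \<Rightarrow> complex) \<Rightarrow> real \<Rightarrow> complex) \<Rightarrow> (real \<Rightarrow> complex) \<Rightarrow> complex" where
  "Delta A \<psi> = inner2 \<psi> (A (A \<psi>)) - (inner2 \<psi> (A \<psi>))\<^sup>2"

end

theory Submission
  imports Defs "HOL-Probability.Probability_Measure"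
begin


definition Fs :: "(nat \<Rightarrow> real) \<Rightarrow> real \<Rightarrow> real" where
  "Fs a s = (\<Sum>n. a (Suc n) * s ^ Suc n)"

locale coef =
  fixes a :: "nat \<Rightarrow> real"
  assumes a_nonneg: "\<And>n. n \<ge> 1 \<Longrightarrow> a n \<ge> 0"
    and conv: "\<And>p::real. summable (\<lambda>n. a (Suc n) * p ^ (2 * Suc n))"
begin

lemma aS: "a (Suc n) \<ge> 0" using a_nonneg by simp

lemma summ_nonneg: "s \<ge> 0 \<Longrightarrow> summable (\<lambda>n. a (Suc n) * s ^ Suc n)"
  using conv[of "sqrt s"] unfolding power_mult by simp

lemma summ_abs: "summable (\<lambda>n. a (Suc n) * \<bar>s\<bar> ^ Suc n)"
  using summ_nonneg[of "\<bar>s\<bar>"] by simp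

lemma summ: "summable (\<lambda>n. a (Suc n) * s ^ Suc n)"
proof (rule summable_norm_cancel)
  show "summable (\<lambda>n. norm (a (Suc n) * s ^ Suc n))"
    using summ_abs[of s] aS by (simp add: abs_mult power_abs)
qed

lemma summ0: "summable (\<lambda>n. a (Suc n) * s ^ n)"
proof (cases "s = 0")
  case True
  then show ?thesis by (simp add: summable_0_powser)
next
  case False
  have "summable (\<lambda>n. (1/s) * (a (Suc n) * s ^ Suc n))"
    using summ[of s] by (rule summable_mult)
  then show ?thesis using False by simp
qed

lemma Fs_eq: "Fs a s = s * (\<Sum>n. a (Suc n) * s ^ n)"
proof -
  have "(\<Sum>n. s * (a (Suc n) * s ^ n)) = s * (\<Sum>n. a (Suc n) * s ^ n)"
    using summ0[of s] by (rule suminf_mult)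
  then show ?thesis unfolding Fs_def by (simp add: mult_ac)
qed

lemma Fs_cont: "isCont (Fs a) s"
proof -
  have "isCont (\<lambda>x. \<Sum>n. a (Suc n) * x ^ n) s"
    by (rule isCont_powser[where K="\<bar>s\<bar> + 1"]) (use summ0 in auto)
  then have "isCont (\<lambda>x. x * (\<Sum>n. a (Suc n) * x ^ n)) s"
    by (intro continuous_intros)
  then show ?thesis by (simp add: Fs_eq[abs_def] fun_eq_iff)
qed

lemma Fs_nonneg: "s \<ge> 0 \<Longrightarrow> Fs a s \<ge> 0"
  unfolding Fs_def using summ aS by (intro suminf_nonneg) auto

lemma fser_eq: "fser a p = 1 + Fs a (p\<^sup>2)"
  unfolding fser_def Fs_def power_mult ..

lemma fser_ge1: "fser a p \<ge> 1"
  using Fs_nonneg[of "p^2"] by (simp add: fser_eq)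

lemma fser_pos: "fser a p > 0"
  using fser_ge1[of p] by simp

lemma fser_cont: "isCont (fser a) p"
proof -
  have "isCont (\<lambda>p. 1 + Fs a (p\<^sup>2)) p"
    by (intro continuous_intros continuous_at_compose[OF _ Fs_cont, unfolded o_def]) 
  then show ?thesis by (simp add: fser_eq[abs_def])
qed

lemma fser_even: "fser a (-p) = fser a p"
  by (simp add: fser_eq)

lemma g_eq: "fser a (sqrt \<bar>s\<bar>) = 1 + Fs a \<bar>s\<bar>"
  by (simp add: fser_eq)

lemma g_eq': "s \<ge> 0 \<Longrightarrow> fser a (sqrt s) = 1 + Fs a s"
  by (simp add: fser_eq)

lemma pow_abs_convex:
  fixes x y t :: real
  assumes t: "0 \<le> t" "t \<le> 1"
  shows "\<bar>(1 - t) * x + t * y\<bar> ^ m \<le> (1 - t) * \<bar>x\<bar> ^ m + t * \<bar>y\<bar> ^ m"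
proof -
  have c: "convex_on {0..} (\<lambda>x::real. x ^ m)"
    by (cases "even m") (auto intro: convex_on_subset[OF convex_power_even] convex_power_odd)
  have "\<bar>(1 - t) * x + t * y\<bar> ^ m \<le> ((1 - t) * \<bar>x\<bar> + t * \<bar>y\<bar>) ^ m"
    using t by (intro power_mono) (auto simp: abs_mult intro: order.trans[OF abs_triangle_ineq])
  also have "\<dots> \<le> (1 - t) * \<bar>x\<bar> ^ m + t * \<bar>y\<bar> ^ m"
    using convex_onD[OF c, of t "\<bar>x\<bar>" "\<bar>y\<bar>"] t by simp
  finally show ?thesis .
qed

lemma g_convex: "convex_on UNIV (\<lambda>s. fser a (sqrt \<bar>s\<bar>))"
proof (rule convex_onI)
  fix t x y :: real
  assume t: "0 < t" "t < 1"
  have "(\<Sum>n. a (Suc n) * \<bar>(1 - t) * x + t * y\<bar> ^ Suc n)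
        \<le> (\<Sum>n. (1 - t) * (a (Suc n) * \<bar>x\<bar> ^ Suc n) + t * (a (Suc n) * \<bar>y\<bar> ^ Suc n))"
  proof (rule suminf_le)
    show "a (Suc n) * \<bar>(1 - t) * x + t * y\<bar> ^ Suc n
        \<le> (1 - t) * (a (Suc n) * \<bar>x\<bar> ^ Suc n) + t * (a (Suc n) * \<bar>y\<bar> ^ Suc n)" for n
      using mult_left_mono[OF pow_abs_convex[of t x y "Suc n"] aS[of n]] t
      by (simp add: algebra_simps)
    show "summable (\<lambda>n. a (Suc n) * \<bar>(1 - t) * x + t * y\<bar> ^ Suc n)" by (rule summ_abs)
    show "summable (\<lambda>n. (1 - t) * (a (Suc n) * \<bar>x\<bar> ^ Suc n) + t * (a (Suc n) * \<bar>y\<bar> ^ Suc n))"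
      by (intro summable_add summable_mult summ_abs)
  qed
  also have "\<dots> = (\<Sum>n. (1 - t) * (a (Suc n) * \<bar>x\<bar> ^ Suc n)) + (\<Sum>n. t * (a (Suc n) * \<bar>y\<bar> ^ Suc n))"
    by (rule suminf_add[symmetric]) (intro summable_mult summ_abs)+
  also have "\<dots> = (1 - t) * (\<Sum>n. a (Suc n) * \<bar>x\<bar> ^ Suc n) + t * (\<Sum>n. a (Suc n) * \<bar>y\<bar> ^ Suc n)"
    by (simp only: suminf_mult[OF summ_abs])
  finally show "fser a (sqrt \<bar>(1 - t) *\<^sub>R x + t *\<^sub>R y\<bar>) \<le> (1 - t) * fser a (sqrt \<bar>x\<bar>) + t * fser a (sqrt \<bar>y\<bar>)"
    by (simp add: g_eq Fs_def algebra_simps del: power_Suc)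
qed auto

lemma g_mono: "mono_on {0..} (\<lambda>s. fser a (sqrt \<bar>s\<bar>))"
proof (rule mono_onI)
  fix x y :: real assume "x \<in> {0..}" "y \<in> {0..}" "x \<le> y"
  then have "(\<Sum>n. a (Suc n) * x ^ Suc n) \<le> (\<Sum>n. a (Suc n) * y ^ Suc n)"
    by (intro suminf_le summ mult_left_mono aS power_mono) auto
  then show "fser a (sqrt \<bar>x\<bar>) \<le> fser a (sqrt \<bar>y\<bar>)"
    using \<open>x \<in> {0..}\<close> \<open>y \<in> {0..}\<close> by (simp add: g_eq' Fs_def del: power_Suc)
qed

lemma g_sq: "fser a (sqrt \<bar>p\<^sup>2\<bar>) = fser a p"
  by (simp add: fser_eq)

end


context coef begin

abbreviation "ff \<equiv> fser a"
abbreviation "KK \<equiv> Kfun (fser a)"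
abbreviation "PP \<equiv> pfun (fser a)"

lemma inv_f_cont: "continuous_on S (\<lambda>s. 1 / fser a s)"
  using fser_cont fser_pos
  by (intro continuous_at_imp_continuous_on ballI continuous_intros) (auto simp: less_imp_neq[symmetric])

lemma K_deriv: "(KK has_real_derivative (1 / ff x)) (at x)"
proof -
  define M where "M = \<bar>x\<bar> + 1"
  have "((\<lambda>u. LBINT y=ereal 0..ereal u. 1 / ff y) has_vector_derivative (1 / ff x)) (at x within {-M..M})"
    by (rule interval_integral_FTC2) (use inv_f_cont in \<open>auto simp: M_def\<close>)
  moreover have "at x within {-M..M} = at x"
    by (rule at_within_Icc_at) (auto simp: M_def)
  ultimately show ?thesis
    by (simp add: Kfun_def[abs_def] has_real_derivative_iff_has_vector_derivative)
qed

lemma K_cont: "isCont KK x"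
  using K_deriv by (rule DERIV_isCont)

lemma K_mono: "x < y \<Longrightarrow> KK x < KK y"
  by (rule DERIV_pos_imp_increasing[of x y KK]) (use K_deriv fser_pos in \<open>auto intro!: exI[of _ "1 / ff _"]\<close>)

lemma K_inj: "KK x = KK y \<longleftrightarrow> x = y"
  using K_mono by (metis linorder_neq_iff less_irrefl)

lemma P_K: "PP (KK x) = x"
  unfolding pfun_def by (rule the_equality) (auto simp: K_inj)

lemma K_0: "KK 0 = 0"
  by (simp add: Kfun_def)

lemma K_odd: "KK (-x) = - KK x"
proof -
  have "\<forall>y. ((\<lambda>p. KK (-p) + KK p) has_real_derivative 0) (at y)"
  proof
    fix y
    have "((\<lambda>p. KK (-p) + KK p) has_real_derivative (1 / ff (-y)) * (-1) + 1 / ff y) (at y)"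
      by (rule derivative_eq_intros DERIV_chain2[OF K_deriv] K_deriv | simp)+
    then show "((\<lambda>p. KK (-p) + KK p) has_real_derivative 0) (at y)"
      by (simp add: fser_even)
  qed
  from DERIV_isconst_all[OF this, of x 0] show ?thesis by (simp add: K_0)
qed

lemma K_range_pos:
  assumes k: "0 \<le> k" "ennreal k < kmax ff"
  shows "\<exists>p. KK p = k"
proof -
  have "\<exists>n::nat. KK (real n) > k"
  proof (rule ccontr)
    assume "\<not> ?thesis"
    then have le: "\<And>n. KK (real n) \<le> k" by (auto simp: not_less)
    define h where "h = (\<lambda>(n::nat) x. ennreal (indicator {0..real n} x / ff x))"
    have inc: "incseq h"
      unfolding h_def incseq_def le_fun_def
      using fser_pos by (auto intro!: ennreal_leI divide_right_mono simp: indicator_def)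
    have meas: "h n \<in> borel_measurable lborel" for n
    proof -
      have "(\<lambda>x. indicator {0..real n} x / ff x) \<in> borel_measurable lborel"
        by (intro borel_measurable_divide borel_measurable_indicator)
           (auto intro!: borel_measurable_continuous_onI continuous_at_imp_continuous_on fser_cont)
      then show ?thesis unfolding h_def by measurable
    qed
    have sup: "(SUP n. h n x) = ennreal (indicator {0..} x / ff x)" for x
    proof (cases "x \<ge> 0")
      case True
      have "h n x \<le> ennreal (indicator {0..} x / ff x)" for n
        unfolding h_def using fser_pos[of x] by (auto intro!: ennreal_leI simp: indicator_def)
      moreover have "h (nat \<lceil>x\<rceil>) x = ennreal (indicator {0..} x / ff x)"
        unfolding h_def using True by (auto simp: indicator_def)
      ultimately show ?thesis
        by (intro antisym SUP_least) (auto intro: SUP_upper2[where i="nat \<lceil>x\<rceil>"])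
    next
      case False
      then show ?thesis by (simp add: h_def indicator_def)
    qed
    have int: "integral\<^sup>N lborel (h n) = ennreal (KK (real n))" for n
    proof -
      have intg: "integrable lborel (\<lambda>x. indicator {0..real n} x *\<^sub>R (1 / ff x))"
        by (rule borel_integrable_compact) (auto intro: inv_f_cont)
      have "integral\<^sup>N lborel (h n) = ennreal (LINT x|lborel. indicator {0..real n} x *\<^sub>R (1 / ff x))"
        unfolding h_def using intg fser_pos
        by (subst nn_integral_eq_integral[symmetric]) (auto intro!: nn_integral_cong simp: indicator_def less_imp_le)
      also have "(LINT x|lborel. indicator {0..real n} x *\<^sub>R (1 / ff x)) = KK (real n)"
        by (simp add: Kfun_def interval_integral_Icc set_lebesgue_integral_def)
      finally show ?thesis .
    qed
    have "kmax ff = (\<integral>\<^sup>+ x. (SUP n. h n x) \<partial>lborel)"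
      by (simp add: kmax_def sup)
    also have "\<dots> = (SUP n. integral\<^sup>N lborel (h n))"
      by (rule nn_integral_monotone_convergence_SUP[OF inc meas])
    also have "\<dots> \<le> ennreal k"
      by (intro SUP_least) (auto simp: int intro: ennreal_leI le)
    finally show False using k by simp
  qed
  then obtain n :: nat where n: "KK (real n) > k" by blast
  have "\<exists>x. 0 \<le> x \<and> x \<le> real n \<and> KK x = k"
    by (rule IVT) (use n k K_cont in \<open>auto simp: K_0\<close>)
  then show ?thesis by blast
qed

lemma K_range:
  assumes k: "k \<in> kdom ff"
  shows "\<exists>p. KK p = k"
proof (cases "k \<ge> 0")
  case True
  then show ?thesis using K_range_pos[of k] k by (simp add: kdom_def)
next
  case False
  then obtain p where "KK p = -k" using K_range_pos[of "-k"] k by (auto simp: kdom_def)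
  then have "KK (-p) = k" by (simp add: K_odd)
  then show ?thesis by blast
qed

lemma K_P: "k \<in> kdom ff \<Longrightarrow> KK (PP k) = k"
  using K_range P_K by metis

lemma P_deriv:
  assumes k: "k \<in> kdom ff"
  shows "(PP has_real_derivative ff (PP k)) (at k)"
proof -
  obtain x where x: "KK x = k" using K_range[OF k] by blast
  have Px: "PP k = x" using x P_K by blast
  have "(PP has_real_derivative inverse (1 / ff (PP k))) (at k)"
  proof (rule DERIV_inverse_function[where a="KK (x - 1)" and b = "KK (x + 1)"])
    show "(KK has_real_derivative 1 / ff (PP k)) (at (PP k))" by (rule K_deriv)
    show "1 / ff (PP k) \<noteq> 0" using fser_pos[of "PP k"] by simp
    show "KK (x - 1) < k" "k < KK (x + 1)" using K_mono x by auto
    show "KK (PP y) = y" if "KK (x - 1) < y" "y < KK (x + 1)" for y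
    proof -
      have "\<exists>z. x - 1 \<le> z \<and> z \<le> x + 1 \<and> KK z = y"
        by (rule IVT) (use that K_cont in auto)
      then show ?thesis using P_K by metis
    qed
    show "isCont PP k"
      using isCont_inverse_function[of 1 x PP KK] P_K K_cont x by auto
  qed
  then show ?thesis using fser_pos[of "PP k"] by simp
qed

end


lemma integC:
  fixes h :: "real \<Rightarrow> 'b::{banach, second_countable_topology}"
  assumes "compact C" "continuous_on C h" "\<And>x. x \<notin> C \<Longrightarrow> h x = 0"
  shows "integrable lborel h"
proof -
  have "integrable lborel (\<lambda>x. indicator C x *\<^sub>R h x)"
    by (rule borel_integrable_compact) (use assms in auto)
  moreover have "(\<lambda>x. indicator C x *\<^sub>R h x) = h"
    using assms(3) by (auto simp: indicator_def fun_eq_iff)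
  ultimately show ?thesis by simp
qed

lemma deriv_outside:
  fixes h :: "real \<Rightarrow> 'b::real_normed_vector"
  assumes "closed C" "x \<notin> C" "\<And>y. y \<notin> C \<Longrightarrow> h y = 0"
  shows "(h has_vector_derivative 0) (at x)"
proof (rule has_vector_derivative_transform_within_open[of "\<lambda>_. 0" 0 x "- C"])
  show "((\<lambda>_. 0) has_vector_derivative 0) (at x)" by (rule derivative_intros)
qed (use assms in auto)

lemma ibp:
  assumes C: "compact C"
    and der: "\<And>x. (h has_real_derivative h' x) (at x)"
    and z: "\<And>x. x \<notin> C \<Longrightarrow> h x = 0"
    and int: "integrable lborel h'"
  shows "integral\<^sup>L lborel h' = 0"
proof -
  obtain B where B: "\<And>x. x \<in> C \<Longrightarrow> \<bar>x\<bar> \<le> B"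
    using compact_imp_bounded[OF C] unfolding bounded_real by blast
  define b where "b = \<bar>B\<bar> + 1"
  have out: "h' x = 0" if "x \<notin> {-b..b}" for x
  proof -
    have "x \<notin> C" using B that by (force simp: b_def)
    have "(h has_vector_derivative 0) (at x)"
      by (rule deriv_outside[OF compact_imp_closed[OF C] \<open>x \<notin> C\<close> z])
    moreover have "(h has_vector_derivative h' x) (at x)"
      using der has_real_derivative_iff_has_vector_derivative by blast
    ultimately show ?thesis using vector_derivative_unique_at by blast
  qed
  have "(h' has_integral (h b - h (-b))) {-b..b}"
    by (rule fundamental_theorem_of_calculus)
       (use der in \<open>auto simp: b_def has_real_derivative_iff_has_vector_derivative[symmetric] intro: has_field_derivative_at_within\<close>)
  moreover have "h b = 0" "h (-b) = 0" using B z by (force simp: b_def)+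
  ultimately have "(h' has_integral 0) {-b..b}" by simp
  then have "((\<lambda>x. if x \<in> {-b..b} then h' x else 0) has_integral 0) UNIV"
    by (subst has_integral_restrict_UNIV) 
  moreover have "(\<lambda>x. if x \<in> {-b..b} then h' x else 0) = h'"
    using out by auto
  ultimately have "(h' has_integral 0) UNIV" by simp
  moreover have "(h' has_integral (integral\<^sup>L lborel h')) UNIV"
    by (rule has_integral_integral_lborel[OF int])
  ultimately show ?thesis using has_integral_unique by blast
qed



locale wave = coef +
  fixes \<psi> :: "real \<Rightarrow> complex"
  assumes psi: "Cc_inf (kdom (fser a)) \<psi>"
    and unit: "inner2 \<psi> \<psi> = 1"
begin

definition "CC = closure {k. \<psi> k \<noteq> 0}"
definition "\<psi>1 = vderiv 1 \<psi>"
definition "\<psi>2 = vderiv 2 \<psi>"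

lemma vderiv_Suc: "vderiv (Suc n) g = (\<lambda>x. vector_derivative (vderiv n g) (at x))"
  by (simp add: vderiv_def)

lemma CCh: "smooth \<psi> \<and> compact CC \<and> CC \<subseteq> kdom ff"
  using psi by (simp only: Cc_inf_def CC_def)
lemma CC_compact: "compact CC" using conjunct1[OF conjunct2[OF CCh]] .
lemma CC_sub: "CC \<subseteq> kdom ff" using conjunct2[OF conjunct2[OF CCh]] .

lemma CC_closed: "closed CC" by (simp add: CC_def)

lemma z0: "x \<notin> CC \<Longrightarrow> \<psi> x = 0"
  unfolding CC_def using closure_subset[of "{k. \<psi> k \<noteq> 0}"] by auto

lemma smooth: "vderiv n \<psi> differentiable (at x)"
  using conjunct1[OF CCh] unfolding smooth_def by simp

lemma d0: "(\<psi> has_vector_derivative \<psi>1 x) (at x)"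
proof -
  have "\<psi> differentiable (at x)" using smooth[of 0 x] by (simp add: vderiv_def)
  then show ?thesis by (simp add: \<psi>1_def vderiv_def vector_derivative_works)
qed

lemma d1: "(\<psi>1 has_vector_derivative \<psi>2 x) (at x)"
proof -
  have "\<psi>1 differentiable (at x)" using smooth[of 1 x] by (simp add: \<psi>1_def)
  moreover have "\<psi>2 x = vector_derivative \<psi>1 (at x)"
    by (simp add: \<psi>2_def \<psi>1_def numeral_2_eq_2 vderiv_def)
  ultimately show ?thesis by (simp add: vector_derivative_works)
qed

lemma c0: "isCont \<psi> x"
  using d0 by (rule has_vector_derivative_continuous)
lemma c1: "isCont \<psi>1 x"
  using d1 by (rule has_vector_derivative_continuous)
lemma c2: "isCont \<psi>2 x"
  using smooth[of 2 x] differentiable_imp_continuous_within by (simp add: \<psi>2_def)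

lemma con0[continuous_intros]: "continuous_on S \<psi>" 
  using c0 by (simp add: continuous_at_imp_continuous_on)
lemma con1[continuous_intros]: "continuous_on S \<psi>1"
  using c1 by (simp add: continuous_at_imp_continuous_on)
lemma con2[continuous_intros]: "continuous_on S \<psi>2"
  using c2 by (simp add: continuous_at_imp_continuous_on)

lemma z1: "x \<notin> CC \<Longrightarrow> \<psi>1 x = 0"
  by (rule vector_derivative_unique_at[OF d0 deriv_outside[OF CC_closed _ z0]])
lemma z2: "x \<notin> CC \<Longrightarrow> \<psi>2 x = 0"
  by (rule vector_derivative_unique_at[OF d1 deriv_outside[OF CC_closed _ z1]])

lemma dRe0: "((\<lambda>x. Re (\<psi> x)) has_real_derivative Re (\<psi>1 x)) (at x)"
  using bounded_linear.has_vector_derivative[OF bounded_linear_Re d0]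
  by (simp add: has_real_derivative_iff_has_vector_derivative)
lemma dIm0: "((\<lambda>x. Im (\<psi> x)) has_real_derivative Im (\<psi>1 x)) (at x)"
  using bounded_linear.has_vector_derivative[OF bounded_linear_Im d0]
  by (simp add: has_real_derivative_iff_has_vector_derivative)
lemma dRe1: "((\<lambda>x. Re (\<psi>1 x)) has_real_derivative Re (\<psi>2 x)) (at x)"
  using bounded_linear.has_vector_derivative[OF bounded_linear_Re d1]
  by (simp add: has_real_derivative_iff_has_vector_derivative)
lemma dIm1: "((\<lambda>x. Im (\<psi>1 x)) has_real_derivative Im (\<psi>2 x)) (at x)"
  using bounded_linear.has_vector_derivative[OF bounded_linear_Im d1]
  by (simp add: has_real_derivative_iff_has_vector_derivative)

lemma isContP: "k \<in> kdom ff \<Longrightarrow> isCont PP k"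
  by (rule DERIV_isCont[OF P_deriv])
lemma conP[continuous_intros]: "continuous_on CC PP"
  by (intro continuous_at_imp_continuous_on ballI isContP subsetD[OF CC_sub])
lemma confP[continuous_intros]: "continuous_on CC (\<lambda>x. ff (PP x))"
  by (intro continuous_at_imp_continuous_on ballI continuous_at_compose[OF isContP fser_cont, unfolded o_def] subsetD[OF CC_sub])

lemma intg: fixes h :: "real \<Rightarrow> 'b::{banach, second_countable_topology}"
  shows "continuous_on CC h \<Longrightarrow> (\<And>x. x \<notin> CC \<Longrightarrow> h x = 0) \<Longrightarrow> integrable lborel h"
  by (rule integC[OF CC_compact])

lemmas zs = z0 z1 z2

lemma xop1: "xop \<psi> = (\<lambda>k. \<i> * \<psi>1 k)"
  by (simp add: xop_def \<psi>1_def vderiv_def)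

lemma xop2: "xop (xop \<psi>) = (\<lambda>k. - \<psi>2 k)"
proof -
  have "vector_derivative (\<lambda>k. \<i> * \<psi>1 k) (at k) = \<i> * \<psi>2 k" for k
    by (rule vector_derivative_at) (rule has_vector_derivative_mult_right[OF d1])
  then show ?thesis by (subst xop1) (simp add: xop_def)
qed

definition "\<rho> x = (Re (\<psi> x))\<^sup>2 + (Im (\<psi> x))\<^sup>2"

lemma cnjrho: "cnj (\<psi> k) * \<psi> k = complex_of_real (\<rho> k)"
  using complex_mult_cnj[of "\<psi> k"] by (simp only: \<rho>_def mult.commute)

lemma unit': "integral\<^sup>L lborel \<rho> = 1"
proof -
  have "inner2 \<psi> \<psi> = complex_of_real (integral\<^sup>L lborel \<rho>)"
    unfolding inner2_def cnjrho integral_complex_of_real ..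
  then show ?thesis using unit by simp
qed

lemma dp_eq: "Re (Delta (pop ff) \<psi>) =
   (LINT k|lborel. (PP k)\<^sup>2 * \<rho> k) - (LINT k|lborel. PP k * \<rho> k)\<^sup>2"
proof -
  have 1: "cnj (\<psi> k) * (complex_of_real (PP k) * (complex_of_real (PP k) * \<psi> k)) 
     = complex_of_real ((PP k)\<^sup>2 * \<rho> k)" for k
  proof -
    have "cnj (\<psi> k) * (complex_of_real (PP k) * (complex_of_real (PP k) * \<psi> k))
      = complex_of_real (PP k) * complex_of_real (PP k) * (cnj (\<psi> k) * \<psi> k)" by algebra
    also have "\<dots> = complex_of_real ((PP k)\<^sup>2 * \<rho> k)"
      unfolding cnjrho by (simp add: power2_eq_square)
    finally show ?thesis .
  qed
  have 2: "cnj (\<psi> k) * (complex_of_real (PP k) * \<psi> k) = complex_of_real (PP k * \<rho> k)" for k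
  proof -
    have "cnj (\<psi> k) * (complex_of_real (PP k) * \<psi> k)
      = complex_of_real (PP k) * (cnj (\<psi> k) * \<psi> k)" by algebra
    also have "\<dots> = complex_of_real (PP k * \<rho> k)"
      unfolding cnjrho by simp
    finally show ?thesis .
  qed
  have "Delta (pop ff) \<psi> = complex_of_real (LINT k|lborel. (PP k)\<^sup>2 * \<rho> k)
      - (complex_of_real (LINT k|lborel. PP k * \<rho> k))\<^sup>2"
    unfolding Delta_def inner2_def pop_def 1 2 integral_complex_of_real ..
  then show ?thesis by (simp del: of_real_power)
qed

end


context wave begin

definition "cc = (LINT k|lborel. Im (\<psi> k) * Re (\<psi>1 k) - Re (\<psi> k) * Im (\<psi>1 k))"
definition "RR = (LINT k|lborel. (Re (\<psi>1 k))\<^sup>2 + (Im (\<psi>1 k))\<^sup>2) - cc\<^sup>2"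

lemma cont_rho[continuous_intros]: "continuous_on S \<rho>"
  unfolding \<rho>_def[abs_def] by (intro continuous_intros)

lemma zrho: "x \<notin> CC \<Longrightarrow> \<rho> x = 0" by (simp add: \<rho>_def z0)

lemma ibp1: "(LINT k|lborel. (Re (\<psi>1 k))\<^sup>2 + (Im (\<psi>1 k))\<^sup>2)
   = - (LINT k|lborel. Re (\<psi> k) * Re (\<psi>2 k) + Im (\<psi> k) * Im (\<psi>2 k))"
proof -
  let ?h = "\<lambda>k. Re (\<psi> k) * Re (\<psi>1 k) + Im (\<psi> k) * Im (\<psi>1 k)"
  let ?A = "\<lambda>k. (Re (\<psi>1 k))\<^sup>2 + (Im (\<psi>1 k))\<^sup>2"
  let ?B = "\<lambda>k. Re (\<psi> k) * Re (\<psi>2 k) + Im (\<psi> k) * Im (\<psi>2 k)"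
  have iA: "integrable lborel ?A" by (rule intg) (auto intro!: continuous_intros simp: zs)
  have iB: "integrable lborel ?B" by (rule intg) (auto intro!: continuous_intros simp: zs)
  have "integral\<^sup>L lborel (\<lambda>k. ?A k + ?B k) = 0"
  proof (rule ibp[OF CC_compact])
    show "(?h has_real_derivative ?A x + ?B x) (at x)" for x
      using DERIV_add[OF DERIV_mult[OF dRe0 dRe1] DERIV_mult[OF dIm0 dIm1], of x]
      by (simp add: power2_eq_square algebra_simps)
    show "?h x = 0" if "x \<notin> CC" for x using that by (simp add: zs)
    show "integrable lborel (\<lambda>k. ?A k + ?B k)" by (intro Bochner_Integration.integrable_add iA iB)
  qed
  then show ?thesis using Bochner_Integration.integral_add[OF iA iB] by simp
qed

lemma dx_ge: "Re (Delta xop \<psi>) \<ge> RR"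
proof -
  have i2: "integrable lborel (\<lambda>k. cnj (\<psi> k) * (- \<psi>2 k))"
    by (rule intg) (auto intro!: continuous_intros simp: zs)
  have i1: "integrable lborel (\<lambda>k. cnj (\<psi> k) * (\<i> * \<psi>1 k))"
    by (rule intg) (auto intro!: continuous_intros simp: zs)
  have e2: "Re (inner2 \<psi> (xop (xop \<psi>))) = (LINT k|lborel. (Re (\<psi>1 k))\<^sup>2 + (Im (\<psi>1 k))\<^sup>2)"
  proof -
    have "Re (inner2 \<psi> (xop (xop \<psi>))) = (LINT k|lborel. Re (cnj (\<psi> k) * (- \<psi>2 k)))"
      unfolding inner2_def xop2 by (rule integral_bounded_linear[OF bounded_linear_Re i2, symmetric])
    also have "\<dots> = - (LINT k|lborel. Re (\<psi> k) * Re (\<psi>2 k) + Im (\<psi> k) * Im (\<psi>2 k))"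
      by (simp add: integral_minus[symmetric])
    finally show ?thesis using ibp1 by simp
  qed
  have e1: "Re (inner2 \<psi> (xop \<psi>)) = cc"
  proof -
    have "Re (inner2 \<psi> (xop \<psi>)) = (LINT k|lborel. Re (cnj (\<psi> k) * (\<i> * \<psi>1 k)))"
      unfolding inner2_def xop1 by (rule integral_bounded_linear[OF bounded_linear_Re i1, symmetric])
    also have "\<dots> = cc" unfolding cc_def by (simp add: algebra_simps)
    finally show ?thesis .
  qed
  have "Re (Delta xop \<psi>) = Re (inner2 \<psi> (xop (xop \<psi>))) - (Re (inner2 \<psi> (xop \<psi>)))\<^sup>2
      + (Im (inner2 \<psi> (xop \<psi>)))\<^sup>2"
    by (simp add: Delta_def Re_power2)
  then show ?thesis using e1 e2 by (simp add: RR_def)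
qed

end


lemma disc:
  fixes Q S R :: real
  assumes "\<And>t. 0 \<le> t\<^sup>2 * Q - 2 * t * S + R" "Q \<ge> 0"
  shows "S\<^sup>2 \<le> R * Q"
proof (cases "Q = 0")
  case True
  have "S = 0"
  proof (rule ccontr)
    assume "S \<noteq> 0"
    have "0 \<le> ((R + 1) / (2 * S))\<^sup>2 * Q - 2 * ((R + 1) / (2 * S)) * S + R" by (rule assms(1))
    then show False using True \<open>S \<noteq> 0\<close> by (simp add: field_simps)
  qed
  then show ?thesis using True by simp
next
  case False
  then have Q: "Q > 0" using assms(2) by simp
  have "0 \<le> (S / Q)\<^sup>2 * Q - 2 * (S / Q) * S + R" by (rule assms(1))
  also have "(S / Q)\<^sup>2 * Q - 2 * (S / Q) * S + R = R - S\<^sup>2 / Q"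
    using Q by (simp add: field_simps power2_eq_square)
  finally have "S\<^sup>2 / Q \<le> R" by simp
  then show ?thesis using Q by (simp add: field_simps)
qed

context wave begin

lemma rho_alt: "\<rho> = (\<lambda>x. Re (\<psi> x) * Re (\<psi> x) + Im (\<psi> x) * Im (\<psi> x))"
  by (simp add: fun_eq_iff \<rho>_def power2_eq_square)

lemma drho: "(\<rho> has_real_derivative 2 * (Re (\<psi> x) * Re (\<psi>1 x) + Im (\<psi> x) * Im (\<psi>1 x))) (at x)"
  unfolding rho_alt
  using DERIV_add[OF DERIV_mult[OF dRe0 dRe0] DERIV_mult[OF dIm0 dIm0], of x]
  by (simp add: algebra_simps)

lemma ibpP: "(LINT k|lborel. ff (PP k) * \<rho> k)
   = - 2 * (LINT k|lborel. (PP k - m) * (Re (\<psi> k) * Re (\<psi>1 k) + Im (\<psi> k) * Im (\<psi>1 k)))"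
proof -
  let ?h = "\<lambda>k. (PP k - m) * \<rho> k"
  let ?A = "\<lambda>k. ff (PP k) * \<rho> k"
  let ?B = "\<lambda>k. (PP k - m) * (Re (\<psi> k) * Re (\<psi>1 k) + Im (\<psi> k) * Im (\<psi>1 k))"
  have iA: "integrable lborel ?A" by (rule intg) (auto intro!: continuous_intros simp: zs zrho)
  have iB: "integrable lborel ?B" by (rule intg) (auto intro!: continuous_intros simp: zs)
  have iB2: "integrable lborel (\<lambda>k. 2 * ?B k)" using iB by simp
  have "integral\<^sup>L lborel (\<lambda>k. ?A k + 2 * ?B k) = 0"
  proof (rule ibp[OF CC_compact])
    show "(?h has_real_derivative ?A x + 2 * ?B x) (at x)" for x
    proof (cases "x \<in> kdom ff")
      case True
      show ?thesis
        using DERIV_mult[OF DERIV_diff[OF P_deriv[OF True] DERIV_const[of m]] drho]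
        by (simp add: algebra_simps)
    next
      case False
      then have x: "x \<notin> CC" using CC_sub by auto
      have "(?h has_vector_derivative 0) (at x)"
        by (rule deriv_outside[OF CC_closed x]) (simp add: zrho)
      then show ?thesis using x
        by (simp add: has_real_derivative_iff_has_vector_derivative zrho zs)
    qed
    show "?h x = 0" if "x \<notin> CC" for x using that by (simp add: zrho)
    show "integrable lborel (\<lambda>k. ?A k + 2 * ?B k)"
      by (intro Bochner_Integration.integrable_add iA iB2)
  qed
  then show ?thesis using Bochner_Integration.integral_add[OF iA iB2] by simp
qed

end


context wave begin

lemma g_cont: "continuous_on UNIV (\<lambda>s. ff (sqrt \<bar>s\<bar>))"
  by (intro continuous_at_imp_continuous_on ballI continuous_at_compose[OF _ fser_cont, unfolded o_def]
      continuous_intros)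

lemma jensen: "ff (sqrt \<bar>LINT k|lborel. (PP k)\<^sup>2 * \<rho> k\<bar>) \<le> (LINT k|lborel. ff (PP k) * \<rho> k)"
proof -
  define M where "M = density lborel \<rho>"
  define X where "X = (\<lambda>k. indicator CC k *\<^sub>R (PP k)\<^sup>2)"
  define g where "g = (\<lambda>s. ff (sqrt \<bar>s\<bar>))"
  have mr[measurable]: "\<rho> \<in> borel_measurable lborel"
    using borel_measurable_continuous_onI[OF cont_rho] by simp
  have nn: "0 \<le> \<rho> x" for x by (simp add: \<rho>_def)
  have ir: "integrable lborel \<rho>" by (rule intg) (auto intro!: continuous_intros simp: zrho)
  have prob: "prob_space M"
  proof (rule prob_spaceI)
    have "emeasure M (space M) = (\<integral>\<^sup>+ x. ennreal (\<rho> x) \<partial>lborel)"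
      unfolding M_def by (simp add: emeasure_density)
    also have "\<dots> = ennreal (integral\<^sup>L lborel \<rho>)"
      by (rule nn_integral_eq_integral[OF ir]) (simp add: nn)
    finally show "emeasure M (space M) = 1" by (simp add: unit')
  qed
  have mX[measurable]: "X \<in> borel_measurable lborel"
  proof -
    have "X \<in> borel_measurable borel"
      unfolding X_def
      by (rule borel_measurable_continuous_on_indicator)
         (auto intro!: continuous_intros borel_closed CC_closed)
    then show ?thesis by simp
  qed
  have mg[measurable]: "g \<in> borel_measurable borel"
    unfolding g_def by (rule borel_measurable_continuous_onI[OF g_cont])
  have mgX[measurable]: "(\<lambda>k. g (X k)) \<in> borel_measurable lborel"
    by measurable
  have rX: "\<rho> k * X k = (PP k)\<^sup>2 * \<rho> k" for k
    by (cases "k \<in> CC") (auto simp: X_def zrho)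
  have rg: "\<rho> k * g (X k) = ff (PP k) * \<rho> k" for k
    by (cases "k \<in> CC") (auto simp: X_def zrho g_def fser_eq)
  have iX: "integrable lborel (\<lambda>k. (PP k)\<^sup>2 * \<rho> k)"
    by (rule intg) (auto intro!: continuous_intros simp: zrho)
  have igX: "integrable lborel (\<lambda>k. ff (PP k) * \<rho> k)"
    by (rule intg) (auto intro!: continuous_intros simp: zrho)
  have 1: "integrable M X"
    unfolding M_def by (subst integrable_density) (auto simp: nn rX iX)
  have 2: "integrable M (\<lambda>k. g (X k))"
    unfolding M_def by (subst integrable_density) (auto simp: nn rg igX)
  have "g (prob_space.expectation M X) \<le> prob_space.expectation M (\<lambda>k. g (X k))"
    by (rule prob_space.jensens_inequality[OF prob 1 _ _ 2, of UNIV 0 0])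
       (auto intro: convex_on_subset g_convex simp: g_def)
  moreover have "prob_space.expectation M X = (LINT k|lborel. (PP k)\<^sup>2 * \<rho> k)"
    unfolding M_def by (subst integral_density) (auto simp: nn rX)
  moreover have "prob_space.expectation M (\<lambda>k. g (X k)) = (LINT k|lborel. ff (PP k) * \<rho> k)"
    unfolding M_def by (subst integral_density) (auto simp: nn rg)
  ultimately show ?thesis by (simp add: g_def)
qed

end


context wave begin

lemma main_ineq: "Re (Delta xop \<psi>) * Re (Delta (pop ff) \<psi>) \<ge> 1/4 * (ff (sqrt \<bar>Re (Delta (pop ff) \<psi>)\<bar>))\<^sup>2"
proof -
  define m where "m = (LINT k|lborel. PP k * \<rho> k)"
  define E2 where "E2 = (LINT k|lborel. (PP k)\<^sup>2 * \<rho> k)"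
  define dp where "dp = Re (Delta (pop ff) \<psi>)"
  define dx where "dx = Re (Delta xop \<psi>)"
  have dp: "dp = E2 - m\<^sup>2" unfolding dp_def dp_eq m_def E2_def ..
  let ?A1 = "\<lambda>k. (PP k - m)\<^sup>2 * \<rho> k"
  let ?A2 = "\<lambda>k. (PP k - m) * (Re (\<psi> k) * Re (\<psi>1 k) + Im (\<psi> k) * Im (\<psi>1 k))"
  let ?A3 = "\<lambda>k. (Re (\<psi>1 k))\<^sup>2 + (Im (\<psi>1 k))\<^sup>2"
  let ?A4 = "\<lambda>k. Im (\<psi> k) * Re (\<psi>1 k) - Re (\<psi> k) * Im (\<psi>1 k)"
  define Q where "Q = integral\<^sup>L lborel ?A1"
  define S where "S = integral\<^sup>L lborel ?A2"
  define W where "W = (LINT k|lborel. ff (PP k) * \<rho> k)"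
  have i\<rho>: "integrable lborel \<rho>" by (rule intg) (auto intro!: continuous_intros simp: zrho)
  have iP: "integrable lborel (\<lambda>k. PP k * \<rho> k)" by (rule intg) (auto intro!: continuous_intros simp: zrho)
  have iP2: "integrable lborel (\<lambda>k. (PP k)\<^sup>2 * \<rho> k)" by (rule intg) (auto intro!: continuous_intros simp: zrho)
  have i1: "integrable lborel ?A1" by (rule intg) (auto intro!: continuous_intros simp: zrho)
  have i2: "integrable lborel ?A2" by (rule intg) (auto intro!: continuous_intros simp: zs)
  have i3: "integrable lborel ?A3" by (rule intg) (auto intro!: continuous_intros simp: zs)
  have i4: "integrable lborel ?A4" by (rule intg) (auto intro!: continuous_intros simp: zs)
  have hQ: "has_bochner_integral lborel (\<lambda>k. (PP k)\<^sup>2 * \<rho> k + (- 2 * m * (PP k * \<rho> k) + m\<^sup>2 * \<rho> k))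
        (E2 + (- 2 * m * m + m\<^sup>2 * 1))"
    unfolding E2_def m_def unit'[symmetric]
    by (intro has_bochner_integral_add has_bochner_integral_mult_right has_bochner_integral_integrable iP iP2 i\<rho>)
  have "Q = E2 + (- 2 * m * m + m\<^sup>2 * 1)"
    unfolding Q_def
    by (rule has_bochner_integral_integral_eq[OF has_bochner_integral_cong[THEN iffD1, OF refl _ refl hQ]])
       (simp add: power2_eq_square algebra_simps)
  then have Qdp: "Q = dp" by (simp add: dp power2_eq_square)
  have Q0: "Q \<ge> 0" unfolding Q_def by (rule Bochner_Integration.integral_nonneg) (simp add: \<rho>_def)
  have WS: "W = - 2 * S" unfolding W_def S_def by (rule ibpP)
  have "\<And>t. 0 \<le> t\<^sup>2 * Q - 2 * t * S + RR"
  proof -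
    fix t :: real
    let ?F = "\<lambda>k. t\<^sup>2 * ?A1 k + (- 2 * t * ?A2 k + (?A3 k + (- 2 * cc * ?A4 k + cc\<^sup>2 * \<rho> k)))"
    have hF: "has_bochner_integral lborel ?F
       (t\<^sup>2 * Q + (- 2 * t * S + (integral\<^sup>L lborel ?A3 + (- 2 * cc * cc + cc\<^sup>2 * 1))))"
      unfolding Q_def S_def cc_def unit'[symmetric]
      by (intro has_bochner_integral_add has_bochner_integral_mult_right has_bochner_integral_integrable i1 i2 i3 i4 i\<rho>)
    have "0 \<le> integral\<^sup>L lborel ?F"
    proof (rule Bochner_Integration.integral_nonneg)
      fix k
      have "?F k = (t * (PP k - m) * Re (\<psi> k) - (Re (\<psi>1 k) - cc * Im (\<psi> k)))\<^sup>2
          + (t * (PP k - m) * Im (\<psi> k) - (Im (\<psi>1 k) + cc * Re (\<psi> k)))\<^sup>2"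
        unfolding \<rho>_def by algebra
      then show "0 \<le> ?F k" by simp
    qed
    also have "integral\<^sup>L lborel ?F = t\<^sup>2 * Q - 2 * t * S + RR"
      using has_bochner_integral_integral_eq[OF hF] by (simp add: RR_def power2_eq_square)
    finally show "0 \<le> t\<^sup>2 * Q - 2 * t * S + RR" .
  qed
  from disc[OF this Q0] have SR: "S\<^sup>2 \<le> RR * Q" .
  have dxR: "dx \<ge> RR" unfolding dx_def by (rule dx_ge)
  have "RR * Q \<le> dx * dp" using dxR Q0 Qdp by (simp add: mult_right_mono)
  have dp0: "dp \<ge> 0" using Q0 Qdp by simp
  have "ff (sqrt \<bar>dp\<bar>) \<le> ff (sqrt \<bar>E2\<bar>)"
    using mono_onD[OF g_mono, of dp E2] dp0 dp by simp
  also have "\<dots> \<le> W" unfolding W_def E2_def by (rule jensen)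
  finally have gW: "ff (sqrt \<bar>dp\<bar>) \<le> W" .
  have "(ff (sqrt \<bar>dp\<bar>))\<^sup>2 \<le> W\<^sup>2"
    using gW fser_ge1[of "sqrt \<bar>dp\<bar>"] by (intro power_mono) auto
  also have "W\<^sup>2 = 4 * S\<^sup>2" using WS by (simp add: power2_eq_square)
  finally have "1/4 * (ff (sqrt \<bar>dp\<bar>))\<^sup>2 \<le> S\<^sup>2" by simp
  also note SR
  also note \<open>RR * Q \<le> dx * dp\<close>
  finally show ?thesis unfolding dx_def dp_def .
qed

end

theorem mainTheorem7:
  fixes a :: "nat \<Rightarrow> real" and \<psi> :: "real \<Rightarrow> complex"
  assumes a_nonneg: "\<And>n. n \<ge> 1 \<Longrightarrow> a n \<ge> 0"
    and conv: "\<And>p::real. summable (\<lambda>n. a (Suc n) * p ^ (2 * Suc n))"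
    and psi: "Cc_inf (kdom (fser a)) \<psi>"
    and unit: "inner2 \<psi> \<psi> = 1"
  shows "let f = fser a; g = (\<lambda>s. f (sqrt \<bar>s\<bar>));
             dx = Re (Delta xop \<psi>); dp = Re (Delta (pop f) \<psi>) in
           convex_on {0..} g \<and> mono_on {0..} g \<and> (\<forall>p. g (p\<^sup>2) = f p)
           \<and> dx * dp \<ge> (1/4) * (g dp)\<^sup>2
           \<and> (dp > 0 \<longrightarrow> dx \<ge> (f (sqrt dp))\<^sup>2 / (4 * dp))"
proof -
  interpret wave a \<psi>
    by unfold_locales (use assms in auto)
  define dx where "dx = Re (Delta xop \<psi>)"
  define dp where "dp = Re (Delta (pop (fser a)) \<psi>)"
  have M: "dx * dp \<ge> 1/4 * (fser a (sqrt \<bar>dp\<bar>))\<^sup>2"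
    unfolding dx_def dp_def by (rule main_ineq)
  have "dp > 0 \<longrightarrow> dx \<ge> (fser a (sqrt dp))\<^sup>2 / (4 * dp)"
  proof
    assume "dp > 0"
    then show "dx \<ge> (fser a (sqrt dp))\<^sup>2 / (4 * dp)"
      using M by (simp add: pos_divide_le_eq)
  qed
  moreover have "convex_on {0..} (\<lambda>s. fser a (sqrt \<bar>s\<bar>))"
    by (rule convex_on_subset[OF g_convex]) auto
  ultimately show ?thesis
    using M g_mono g_sq unfolding Let_def dx_def dp_def by auto
qed


end
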